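(* Let $C\ge 1$. If there exists a $C$-competitive online algorithm for $\textsc{Strip-Packing}$, then for every $n$ there exists a $4C$-competitive online algorithm for $\textsc{Online-Sorting}[2C,n]$.
   Context: $\textsc{Strip-Packing}$: pieces are convex polygons arriving one at a time; each must be placed irrevocably, by translation only, inside the strip $[0,\infty)\times[0,1]$, interior-disjoint from previously placed pieces, before the next piece is revealed. The cost is the largest $x$-coordinate of a point of a placed piece. An algorithm $\mathcal A$ is $C$-competitive if $\mathcal A(I)\le C\cdot\mathrm{OPT}(I)$ for every instance $I$, where $\mathrm{OPT}(I)$ is the offline optimal cost. $\textsc{Online-Sorting}[\gamma,n]$: an array of $\gamma n$ initially empty cells; a stream of $n$ reals in $[0,1]$ arrives one at a time and each must be placed irrevocably into an empty cell before the next is revealed. With $r_1,\dots,r_n$ the reals in left-to-right order in the array, $r_0:=0$, $r_{n+1}:=1$, the cost is $\sum_{i=0}^n|r_{i+1}-r_i|$; the offline optimum is $1$, and an algorithm is $\Delta$-competitive if its cost is at most $\Delta$ on every stream. *)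

theory Defs
  imports "HOL-Analysis.Analysis"
begin

definition strip :: "(real \<times> real) set" where
  "strip = {p. 0 \<le> fst p \<and> 0 \<le> snd p \<and> snd p \<le> 1}"

definition translate :: "real \<times> real \<Rightarrow> (real \<times> real) set \<Rightarrow> (real \<times> real) set" where
  "translate t P = (\<lambda>p. t + p) ` P"

definition is_piece :: "(real \<times> real) set \<Rightarrow> bool" where
  "is_piece P \<longleftrightarrow> (\<exists>V. finite V \<and> P = convex hull V) \<and> interior P \<noteq> {}
                   \<and> (\<exists>t. translate t P \<subseteq> strip)"

definition placement_ok :: "(real \<times> real) set list \<Rightarrow> (real \<times> real) list \<Rightarrow> bool" where
  "placement_ok Ps ts \<longleftrightarrow> length ts = length Ps
     \<and> (\<forall>i<length Ps. translate (ts ! i) (Ps ! i) \<subseteq> strip)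
     \<and> (\<forall>i j. i < j \<and> j < length Ps \<longrightarrow>
            interior (translate (ts ! i) (Ps ! i)) \<inter> interior (translate (ts ! j) (Ps ! j)) = {})"

definition packing_cost :: "(real \<times> real) set list \<Rightarrow> (real \<times> real) list \<Rightarrow> real" where
  "packing_cost Ps ts = Sup (fst ` (\<Union>i<length Ps. translate (ts ! i) (Ps ! i)))"

definition strip_OPT :: "(real \<times> real) set list \<Rightarrow> real" where
  "strip_OPT Ps = Inf {packing_cost Ps ts | ts. placement_ok Ps ts}"

text \<open>A deterministic online strip-packing algorithm maps the sequence of pieces revealed so
  far (the last one being the current piece) to the translation applied to the current piece.
  Its placement is thus irrevocable and depends only on the pieces revealed so far.\<close>

type_synonym strip_alg = "(real \<times> real) set list \<Rightarrow> real \<times> real"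

definition online_translations :: "strip_alg \<Rightarrow> (real \<times> real) set list \<Rightarrow> (real \<times> real) list" where
  "online_translations A Ps = map (\<lambda>k. A (take (Suc k) Ps)) [0..<length Ps]"

definition strip_competitive :: "real \<Rightarrow> strip_alg \<Rightarrow> bool" where
  "strip_competitive C A \<longleftrightarrow>
     (\<forall>Ps. Ps \<noteq> [] \<and> (\<forall>P\<in>set Ps. is_piece P) \<longrightarrow>
        placement_ok Ps (online_translations A Ps)
        \<and> packing_cost Ps (online_translations A Ps) \<le> C * strip_OPT Ps)"

text \<open>A deterministic online sorting algorithm maps the reals revealed so far (the last one
  being the current real) to the (0-based) index of the cell receiving the current real.\<close>

type_synonym sort_alg = "real list \<Rightarrow> nat"

definition num_cells :: "real \<Rightarrow> nat \<Rightarrow> nat" where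
  "num_cells \<gamma> n = nat \<lfloor>\<gamma> * real n\<rfloor>"

definition sort_positions :: "sort_alg \<Rightarrow> real list \<Rightarrow> nat list" where
  "sort_positions alg xs = map (\<lambda>k. alg (take (Suc k) xs)) [0..<length xs]"

definition sort_valid :: "real \<Rightarrow> nat \<Rightarrow> sort_alg \<Rightarrow> real list \<Rightarrow> bool" where
  "sort_valid \<gamma> n alg xs \<longleftrightarrow>
     (\<forall>p\<in>set (sort_positions alg xs). p < num_cells \<gamma> n) \<and> distinct (sort_positions alg xs)"

fun path_len :: "real list \<Rightarrow> real" where
  "path_len (a # b # rest) = \<bar>b - a\<bar> + path_len (b # rest)"
| "path_len _ = 0"

definition sorted_contents :: "sort_alg \<Rightarrow> real list \<Rightarrow> real list" where
  "sorted_contents alg xs =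
     map (\<lambda>k. xs ! k) (sort_key (\<lambda>k. sort_positions alg xs ! k) [0..<length xs])"

definition sort_cost :: "sort_alg \<Rightarrow> real list \<Rightarrow> real" where
  "sort_cost alg xs = path_len (0 # sorted_contents alg xs @ [1])"

definition sort_competitive :: "real \<Rightarrow> nat \<Rightarrow> real \<Rightarrow> sort_alg \<Rightarrow> bool" where
  "sort_competitive \<gamma> n \<Delta> alg \<longleftrightarrow>
     (\<forall>xs. length xs = n \<and> (\<forall>x\<in>set xs. 0 \<le> x \<and> x \<le> 1) \<longrightarrow>
        sort_valid \<gamma> n alg xs \<and> sort_cost alg xs \<le> \<Delta>)"

end

theory Submission imports Defs begin

lemma lin_sign:
  fixes g0 d w :: real
  assumes w: "w > 0" and H: "\<And>y. 0 < y \<Longrightarrow> y < 1 \<Longrightarrow> w \<le> \<bar>g0 + d*y\<bar>"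
  shows "(w \<le> g0 \<and> w \<le> g0 + d) \<or> (g0 \<le> -w \<and> g0 + d \<le> -w)"
proof (rule ccontr)
  assume nc: "\<not> ?thesis"
  have "\<exists>y. 0<y \<and> y<1 \<and> \<bar>g0 + d*y\<bar> < w"
  proof (cases "\<bar>g0\<bar> < w")
    case True
    define m where "m = min (1/2) ((w - \<bar>g0\<bar>)/(2*(\<bar>d\<bar>+1)))"
    have m0: "m > 0" using True by (simp add: m_def)
    have m1: "m < 1" by (simp add: m_def)
    have "m * (2*(\<bar>d\<bar>+1)) \<le> w - \<bar>g0\<bar>"
        proof -
          have K: "0 < 2*(\<bar>d\<bar>+1)" by simp
          have "m \<le> (w - \<bar>g0\<bar>)/(2*(\<bar>d\<bar>+1))" unfolding m_def by simp
          hence "m * (2*(\<bar>d\<bar>+1)) \<le> (w - \<bar>g0\<bar>)/(2*(\<bar>d\<bar>+1)) * (2*(\<bar>d\<bar>+1))"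
            using K by (intro mult_right_mono) auto
          thus ?thesis using K by simp
        qed
    hence "\<bar>d*m\<bar> < w - \<bar>g0\<bar>"
    proof -
      assume a: "m * (2*(\<bar>d\<bar>+1)) \<le> w - \<bar>g0\<bar>"
      have "\<bar>d*m\<bar> = \<bar>d\<bar>*m" using m0 by (simp add: abs_mult)
      also have "\<dots> < 2*(\<bar>d\<bar>+1)*m" using m0 by (intro mult_strict_right_mono) auto
      finally show ?thesis using a by (simp add: algebra_simps)
    qed
    thus ?thesis using m0 m1 by (intro exI[of _ m]) auto
  next
    case F1: False
    show ?thesis
    proof (cases "\<bar>g0 + d\<bar> < w")
      case True
      define m where "m = min (1/2) ((w - \<bar>g0+d\<bar>)/(2*(\<bar>d\<bar>+1)))"
      have m0: "m > 0" using True by (simp add: m_def)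
      have m1: "m < 1" by (simp add: m_def)
      have "m * (2*(\<bar>d\<bar>+1)) \<le> w - \<bar>g0+d\<bar>"
          proof -
            have K: "0 < 2*(\<bar>d\<bar>+1)" by simp
            have "m \<le> (w - \<bar>g0+d\<bar>)/(2*(\<bar>d\<bar>+1))" unfolding m_def by simp
            hence "m * (2*(\<bar>d\<bar>+1)) \<le> (w - \<bar>g0+d\<bar>)/(2*(\<bar>d\<bar>+1)) * (2*(\<bar>d\<bar>+1))"
              using K by (intro mult_right_mono) auto
            thus ?thesis using K by simp
          qed
      hence "\<bar>d*m\<bar> < w - \<bar>g0+d\<bar>"
      proof -
        assume a: "m * (2*(\<bar>d\<bar>+1)) \<le> w - \<bar>g0+d\<bar>"
        have "\<bar>d*m\<bar> = \<bar>d\<bar>*m" using m0 by (simp add: abs_mult)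
        also have "\<dots> < 2*(\<bar>d\<bar>+1)*m" using m0 by (intro mult_strict_right_mono) auto
        finally show ?thesis using a by (simp add: algebra_simps)
      qed
      moreover have "g0 + d*(1-m) = (g0+d) - d*m" by (simp add: algebra_simps)
      ultimately show ?thesis using m0 m1 by (intro exI[of _ "1-m"]) auto
    next
      case False
      hence cs: "(g0 \<ge> w \<and> g0 + d \<le> -w) \<or> (g0 \<le> -w \<and> g0 + d \<ge> w)" using F1 nc by auto
      hence dnz: "d \<noteq> 0" using w by auto
      have "g0 + d * (-g0/d) = 0" using dnz by simp
      moreover have "0 < -g0/d" "-g0/d < 1" using cs w by (auto simp: field_simps)
      ultimately show ?thesis using w by (intro exI[of _ "-g0/d"]) auto
    qed
  qed
  thus False using H by force
qed

lemma mem_translate: "q \<in> translate t P \<longleftrightarrow> q - t \<in> P"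
  unfolding translate_def by (auto simp: image_iff intro: bexI[of _ "q - t"])

definition par :: "real \<Rightarrow> real \<Rightarrow> (real \<times> real) set" where
  "par w s = {p. 0 \<le> snd p \<and> snd p \<le> 1 \<and> s * snd p \<le> fst p \<and> fst p \<le> s * snd p + w}"

lemma convex_par: "convex (par w s)"
proof (rule convexI)
  fix p q :: "real \<times> real" and u v :: real
  assume p: "p \<in> par w s" and q: "q \<in> par w s" and uv: "0 \<le> u" "0 \<le> v" "u + v = 1"
  obtain a b where ab: "p = (a,b)" by (cases p)
  obtain c d where cd: "q = (c,d)" by (cases q)
  have h: "0 \<le> b" "b \<le> 1" "s * b \<le> a" "a \<le> s * b + w" "0 \<le> d" "d \<le> 1" "s * d \<le> c" "c \<le> s * d + w"
     "0 \<le> u" "0 \<le> v" "u + v = 1" using p q uv by (auto simp: ab cd par_def)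
  have e1: "s * (u * b + v * d) = u * (s * b) + v * (s * d)" by (simp add: algebra_simps)
  have f1: "u * (s * b) \<le> u * a" "v * (s * d) \<le> v * c" using h by (simp_all add: mult_left_mono)
  have f2: "u * a \<le> u * (s * b + w)" "v * c \<le> v * (s * d + w)" using h by (simp_all add: mult_left_mono)
  have f3: "u * b \<le> u" "v * d \<le> v" using h by (simp_all add: mult_left_le)
  have f4: "0 \<le> u * b" "0 \<le> v * d" using h by simp_all
  have f5: "u * (s * b + w) = u * (s * b) + u * w" "v * (s * d + w) = v * (s * d) + v * w" by (simp_all add: algebra_simps)
  have f6: "u * w + v * w = w" using h(11) by (metis distrib_right mult_1)
  have c1: "0 \<le> u * b + v * d" using f4 by linarith
  have c2: "u * b + v * d \<le> 1" using f3 h(11) by linarith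
  have c3: "s * (u * b + v * d) \<le> u * a + v * c" unfolding e1 using f1 by linarith
  have c4: "u * a + v * c \<le> s * (u * b + v * d) + w" unfolding e1 using f2 f5 f6 by linarith
  have "u *\<^sub>R p + v *\<^sub>R q = (u * a + v * c, u * b + v * d)" by (simp add: ab cd)
  thus "u *\<^sub>R p + v *\<^sub>R q \<in> par w s" using c1 c2 c3 c4 by (simp add: par_def)
qed

lemma par_hull:
  assumes w: "w > 0"
  shows "par w s = convex hull {(0,0),(w,0),(s,1),(s+w,1)}"
proof
  show "convex hull {(0,0),(w,0),(s,1),(s+w,1)} \<subseteq> par w s"
    apply (rule hull_minimal)
    using w apply (auto simp: par_def)[1]
    by (rule convex_par)
next
  show "par w s \<subseteq> convex hull {(0,0),(w,0),(s,1),(s+w,1)}"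
  proof
    fix p assume p: "p \<in> par w s"
    obtain x y where xy: "p = (x,y)" by (cases p)
    let ?H = "convex hull {(0::real,0::real),(w,0),(s,1),(s+w,1)}"
    have cv: "convex ?H" by (rule convex_convex_hull)
    define u where "u = (x - s*y)/w"
    have u: "0 \<le> u" "u \<le> 1" using p w by (auto simp: u_def par_def xy field_simps)
    have y: "0 \<le> y" "y \<le> 1" using p by (auto simp: par_def xy)
    have P0: "(1-u) *\<^sub>R (0,0) + u *\<^sub>R (w,0) \<in> ?H"
      by (rule convexD[OF cv]) (use u in \<open>auto intro: hull_inc\<close>)
    have P1: "(1-u) *\<^sub>R (s,1) + u *\<^sub>R (s+w,1) \<in> ?H"
      by (rule convexD[OF cv]) (use u in \<open>auto intro: hull_inc\<close>)
    have "(1-y) *\<^sub>R ((1-u) *\<^sub>R (0,0) + u *\<^sub>R (w,0)) + y *\<^sub>R ((1-u) *\<^sub>R (s,1) + u *\<^sub>R (s+w,1)) \<in> ?H"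
      by (rule convexD[OF cv P0 P1]) (use y in auto)
    moreover have "(1-y) *\<^sub>R ((1-u) *\<^sub>R (0,0) + u *\<^sub>R (w,0)) + y *\<^sub>R ((1-u) *\<^sub>R (s,1) + u *\<^sub>R (s+w,1)) = p"
      using w by (simp add: xy u_def field_simps)
    ultimately show "p \<in> ?H" by simp
  qed
qed

lemma mem_tpar: "q \<in> translate (a,b) (par w s) \<longleftrightarrow> 0 \<le> snd q - b \<and> snd q - b \<le> 1 \<and> s*(snd q - b) \<le> fst q - a \<and> fst q - a \<le> s*(snd q - b) + w"
  by (cases q) (simp add: mem_translate par_def)

definition opar :: "real \<Rightarrow> real \<Rightarrow> real \<Rightarrow> (real \<times> real) set" where
  "opar a w s = {p. 0 < snd p \<and> snd p < 1 \<and> a + s * snd p < fst p \<and> fst p < a + s * snd p + w}"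

lemma open_opar: "open (opar a w s)"
  unfolding opar_def Collect_conj_eq by (intro open_Int open_Collect_less continuous_intros)

lemma opar_interior: "opar a w s \<subseteq> interior (translate (a,0) (par w s))"
  apply (rule interior_maximal)
   apply (auto simp: opar_def mem_tpar)[1]
  by (rule open_opar)

lemma translate0: "translate (0,0) P = P"
  by (auto simp: mem_translate)

lemma is_piece_par:
  assumes w: "w > 0" and s: "0 \<le> s"
  shows "is_piece (par w s)"
  unfolding is_piece_def
proof (intro conjI)
  show "\<exists>V. finite V \<and> par w s = convex hull V"
    by (rule exI[of _ "{(0,0),(w,0),(s,1),(s+w,1)}"]) (simp add: par_hull[OF w])
  have "(s/2 + w/2, 1/2) \<in> opar 0 w s" using w by (simp add: opar_def)
  thus "interior (par w s) \<noteq> {}" using opar_interior[of 0 w s] by (auto simp: translate0)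
  have "translate (0,0) (par w s) \<subseteq> strip"
    using s by (auto simp: translate0 strip_def par_def intro: order_trans[OF mult_nonneg_nonneg])
  thus "\<exists>t. translate t (par w s) \<subseteq> strip" by blast
qed

lemma piece_bounded: "is_piece P \<Longrightarrow> bounded P"
  unfolding is_piece_def
  by (metis compact_convex_hull finite_imp_compact compact_imp_bounded)

lemma union_bdd:
  assumes "\<forall>P\<in>set Ps. is_piece P"
  shows "bdd_above (fst ` (\<Union>i<length Ps. translate (ts!i) (Ps!i)))"
proof -
  have "bounded (\<Union>i<length Ps. translate (ts!i) (Ps!i))"
  proof (rule bounded_UN)
    show "\<forall>i\<in>{..<length Ps}. bounded (translate (ts ! i) (Ps ! i))"
    proof
      fix i assume "i \<in> {..<length Ps}"
      hence "bounded (Ps!i)" using assms by (intro piece_bounded) auto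
      thus "bounded (translate (ts ! i) (Ps ! i))" unfolding translate_def by (rule bounded_translation)
    qed
  qed simp
  thus ?thesis by (intro bounded_imp_bdd_above bounded_linear_image bounded_linear_fst)
qed

lemma cost_upper:
  assumes "\<forall>P\<in>set Ps. is_piece P" "i < length Ps" "q \<in> translate (ts!i) (Ps!i)"
  shows "fst q \<le> packing_cost Ps ts"
  unfolding packing_cost_def using assms by (intro cSup_upper union_bdd) auto

lemma cost_nonneg:
  assumes "\<forall>P\<in>set Ps. is_piece P" "Ps \<noteq> []" "placement_ok Ps ts"
  shows "0 \<le> packing_cost Ps ts"
proof -
  have "is_piece (Ps!0)" using assms by auto
  hence "interior (Ps!0) \<noteq> {}" by (simp add: is_piece_def)
  then obtain p where "p \<in> Ps!0" using interior_subset by blast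
  hence q: "ts!0 + p \<in> translate (ts!0) (Ps!0)" by (simp add: translate_def)
  hence "ts!0 + p \<in> strip" using assms by (auto simp: placement_ok_def)
  hence "0 \<le> fst (ts!0 + p)" by (simp add: strip_def)
  also have "\<dots> \<le> packing_cost Ps ts" using assms q by (intro cost_upper) auto
  finally show ?thesis .
qed

lemma OPT_le:
  assumes "\<forall>P\<in>set Ps. is_piece P" "Ps \<noteq> []" "placement_ok Ps ts"
  shows "strip_OPT Ps \<le> packing_cost Ps ts"
  unfolding strip_OPT_def
proof (rule cInf_lower)
  show "packing_cost Ps ts \<in> {packing_cost Ps ts |ts. placement_ok Ps ts}" using assms by blast
  show "bdd_below {packing_cost Ps ts |ts. placement_ok Ps ts}"
    using cost_nonneg[OF assms(1,2)] by (auto intro!: bdd_belowI[of _ 0])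
qed

lemma strip_b0:
  assumes w: "0 \<le> w" and sub: "translate (a,b) (par w s) \<subseteq> strip"
  shows "b = 0 \<and> 0 \<le> a"
proof -
  have "(a,b) \<in> translate (a,b) (par w s)" "(a+s,b+1) \<in> translate (a,b) (par w s)"
    using w by (auto simp: mem_tpar)
  hence "(a,b) \<in> strip" "(a+s,b+1) \<in> strip" using sub by blast+
  thus ?thesis by (auto simp: strip_def)
qed

lemma sep:
  assumes w: "w > 0"
    and D: "interior (translate (a1,0) (par w s1)) \<inter> interior (translate (a2,0) (par w s2)) = {}"
  shows "(a1 + w \<le> a2 \<and> a1 + s1 + w \<le> a2 + s2) \<or> (a2 + w \<le> a1 \<and> a2 + s2 + w \<le> a1 + s1)"
proof -
  have H: "w \<le> \<bar>(a2 - a1) + (s2 - s1)*y\<bar>" if y: "0 < y" "y < 1" for y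
  proof (rule ccontr)
    assume "\<not> w \<le> \<bar>(a2 - a1) + (s2 - s1)*y\<bar>"
    hence lt: "\<bar>(a2 + s2*y) - (a1 + s1*y)\<bar> < w" by (simp add: algebra_simps)
    define x where "x = (max (a1 + s1*y) (a2 + s2*y) + min (a1 + s1*y) (a2 + s2*y) + w)/2"
    have "(x,y) \<in> opar a1 w s1" "(x,y) \<in> opar a2 w s2"
      using lt y unfolding opar_def x_def by auto
    thus False using D opar_interior[of a1 w s1] opar_interior[of a2 w s2] by blast
  qed
  from lin_sign[OF w H] show ?thesis by linarith
qed

lemma opt_disj:
  assumes le: "a1 + w \<le> a2" and s: "s1 \<le> s2"
  shows "interior (translate (a1,0) (par w s1)) \<inter> interior (translate (a2,0) (par w s2)) = {}"
proof -
  let ?T = "translate (a1,0) (par w s1) \<inter> translate (a2,0) (par w s2)"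
  have key: "fst q = a2 + s2 * snd q" if q: "q \<in> ?T" for q
  proof -
    have y: "0 \<le> snd q" using q by (simp add: mem_tpar)
    have "s1 * snd q \<le> s2 * snd q" using y s by (simp add: mult_right_mono)
    thus ?thesis using q le by (simp add: mem_tpar)
  qed
  show ?thesis
  proof (rule ccontr)
    assume "\<not> ?thesis"
    then obtain p where "p \<in> interior (translate (a1,0) (par w s1)) \<inter> interior (translate (a2,0) (par w s2))" by blast
    hence "p \<in> interior ?T" by (simp only: interior_Int)
    then obtain e where e: "e > 0" "ball p e \<subseteq> ?T" unfolding mem_interior by blast
    obtain x y where p: "p = (x,y)" by (cases p)
    have "(x + e/2, y) \<in> ball p e" using e by (simp add: p dist_Pair_Pair dist_real_def)
    hence "(x + e/2, y) \<in> ?T" using e by blast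
    moreover have "p \<in> ?T" using e by auto
    ultimately show False using key[of p] key[of "(x+e/2,y)"] e by (simp add: p)
  qed
qed

lemma chain_path:
  assumes "sorted_wrt (\<lambda>u v. a u + w + max 0 (s u - s v) \<le> a v) (u#L)" "\<forall>x\<in>set (u#L). s x \<le> (1::real)"
  shows "path_len (map s (u#L) @ [1]) \<le> 1 - s u + 2*(a (last (u#L)) - a u - real (length L) * w)"
  using assms
proof (induction L arbitrary: u)
  case Nil
  thus ?case by simp
next
  case (Cons v L)
  have IH: "path_len (map s (v#L) @ [1]) \<le> 1 - s v + 2*(a (last (v#L)) - a v - real (length L) * w)"
    using Cons.prems by (intro Cons.IH) auto
  have st: "a u + w + max 0 (s u - s v) \<le> a v" using Cons.prems by simp
  have "path_len (map s (u#v#L) @ [1]) = \<bar>s v - s u\<bar> + path_len (map s (v#L) @ [1])" by simp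
  also have "\<dots> \<le> 1 - s u + 2*(a (last (u#v#L)) - a u - real (length (v#L)) * w)"
  proof -
    have ab: "\<bar>s v - s u\<bar> \<le> 2 * max 0 (s u - s v) + s v - s u" by (simp add: abs_if max_def)
    have L: "last (u#v#L) = last (v#L)" "real (length (v#L)) = real (length L) + 1" by simp_all
    show ?thesis unfolding L using IH st ab by (simp add: algebra_simps)
  qed
  finally show ?case .
qed

definition rk :: "(nat \<Rightarrow> real) \<Rightarrow> nat \<Rightarrow> nat \<Rightarrow> nat" where
  "rk s n k = card {j. j < n \<and> (s j < s k \<or> (s j = s k \<and> j < k))}"

lemma rk_less:
  assumes "i < n" "s i < s j \<or> (s i = s j \<and> i < j)"
  shows "rk s n i < rk s n j"
  unfolding rk_def
proof (rule psubset_card_mono)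
  show "finite {j'. j' < n \<and> (s j' < s j \<or> (s j' = s j \<and> j' < j))}" by simp
  show "{j. j < n \<and> (s j < s i \<or> s j = s i \<and> j < i)} \<subset> {j'. j' < n \<and> (s j' < s j \<or> (s j' = s j \<and> j' < j))}"
    using assms by auto
qed

lemma rk_bound: "k < n \<Longrightarrow> rk s n k \<le> n - 1"
  unfolding rk_def
proof -
  assume k: "k < n"
  have "{j. j < n \<and> (s j < s k \<or> (s j = s k \<and> j < k))} \<subseteq> {0..<n} - {k}" by auto
  hence "card {j. j < n \<and> (s j < s k \<or> (s j = s k \<and> j < k))} \<le> card ({0..<n} - {k})"
    by (intro card_mono) auto
  thus "card {j. j < n \<and> (s j < s k \<or> (s j = s k \<and> j < k))} \<le> n - 1" using k by simp
qed

lemma sorted_wrt_distinct_ne: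
  "sorted_wrt P xs \<Longrightarrow> distinct xs \<Longrightarrow> sorted_wrt (\<lambda>x y. P x y \<and> x \<noteq> y) xs"
  by (induction xs) auto

lemma OPT_bound:
  assumes n: "n \<ge> 1" and w: "w = 1 / real n" and len: "length xs = n"
    and xs: "\<forall>x\<in>set xs. 0 \<le> x \<and> x \<le> 1"
  shows "strip_OPT (map (par w) xs) \<le> 2"
proof -
  define Ps where "Ps = map (par w) xs"
  define s where "s = (\<lambda>k. xs ! k)"
  define ts where "ts = map (\<lambda>k. (real (rk s n k) * w, 0::real)) [0..<n]"
  have w0: "w > 0" using n w by simp
  have nw: "real n * w = 1" using n w by simp
  have sk: "0 \<le> s k \<and> s k \<le> 1" if "k < n" for k using xs len that by (auto simp: s_def)
  have pieces: "\<forall>P\<in>set Ps. is_piece P" using xs w0 by (auto simp: Ps_def intro!: is_piece_par)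
  have Pne: "Ps \<noteq> []" using n len by (auto simp: Ps_def)
  have Pk: "Ps ! k = par w (s k)" if "k < n" for k using that len by (simp add: Ps_def s_def)
  have tk: "ts ! k = (real (rk s n k) * w, 0)" if "k < n" for k using that by (simp add: ts_def)
  have rkw: "real (rk s n i) * w + w \<le> real (rk s n j) * w" if "rk s n i < rk s n j" for i j
  proof -
    have "real (rk s n i) + 1 \<le> real (rk s n j)" using that by linarith
    hence "(real (rk s n i) + 1) * w \<le> real (rk s n j) * w" using w0 by (intro mult_right_mono) auto
    thus ?thesis by (simp add: algebra_simps)
  qed
  have ok: "placement_ok Ps ts"
    unfolding placement_ok_def
  proof (intro conjI allI impI)
    show "length ts = length Ps" using len by (simp add: ts_def Ps_def)
    fix i assume i: "i < length Ps"
    hence i': "i < n" using len by (simp add: Ps_def)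
    show "translate (ts ! i) (Ps ! i) \<subseteq> strip"
    proof
      fix q assume "q \<in> translate (ts ! i) (Ps ! i)"
      hence q: "q \<in> translate (real (rk s n i) * w, 0) (par w (s i))" using tk[OF i'] Pk[OF i'] by simp
      have "0 \<le> s i * snd q" using q sk[OF i'] by (simp add: mem_tpar)
      moreover have "0 \<le> real (rk s n i) * w" using w0 by simp
      moreover have "0 \<le> snd q" "snd q \<le> 1" "s i * snd q \<le> fst q - real (rk s n i) * w"
        using q by (simp_all add: mem_tpar)
      ultimately show "q \<in> strip" unfolding strip_def by simp
    qed
  next
    fix i j assume ij: "i < j \<and> j < length Ps"
    hence i': "i < n" and j': "j < n" using len by (auto simp: Ps_def)
    show "interior (translate (ts ! i) (Ps ! i)) \<inter> interior (translate (ts ! j) (Ps ! j)) = {}"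
    proof (cases "s i \<le> s j")
      case True
      hence "rk s n i < rk s n j" using ij i' by (intro rk_less) auto
      thus ?thesis using tk[OF i'] tk[OF j'] Pk[OF i'] Pk[OF j'] True by (simp add: opt_disj rkw)
    next
      case False
      hence "rk s n j < rk s n i" using j' by (intro rk_less) auto
      hence "interior (translate (ts ! j) (Ps ! j)) \<inter> interior (translate (ts ! i) (Ps ! i)) = {}"
        using tk[OF i'] tk[OF j'] Pk[OF i'] Pk[OF j'] False by (simp add: opt_disj rkw)
      thus ?thesis by blast
    qed
  qed
  have "packing_cost Ps ts \<le> 2"
    unfolding packing_cost_def
  proof (rule cSup_least)
    have "(0::nat) < length Ps" using Pne by simp
    moreover have "ts!0 \<in> translate (ts ! 0) (Ps ! 0)"
      using n tk[of 0] Pk[of 0] w0 by (simp add: mem_tpar)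
    ultimately show "fst ` (\<Union>i<length Ps. translate (ts ! i) (Ps ! i)) \<noteq> {}" by blast
  next
    fix x assume "x \<in> fst ` (\<Union>i<length Ps. translate (ts ! i) (Ps ! i))"
    then obtain i q where i: "i < length Ps" and q: "q \<in> translate (ts ! i) (Ps ! i)" and x: "x = fst q" by auto
    have i': "i < n" using i len by (simp add: Ps_def)
    have q': "q \<in> translate (real (rk s n i) * w, 0) (par w (s i))" using q tk[OF i'] Pk[OF i'] by simp
    have "s i * snd q \<le> s i" using q' sk[OF i'] by (simp add: mem_tpar mult_left_le)
    hence "x \<le> real (rk s n i) * w + s i + w" using q' x by (simp add: mem_tpar)
    also have "real (rk s n i) * w \<le> real (n - 1) * w" using rk_bound[OF i'] w0 by (intro mult_right_mono) auto
    also have "real (n - 1) * w = 1 - w" using n nw by (simp add: of_nat_diff algebra_simps)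
    finally show "x \<le> 2" using sk[OF i'] by simp
  qed
  thus ?thesis using OPT_le[OF pieces Pne ok] by (simp add: Ps_def)
qed

theorem lemma7:
  fixes C :: real
  assumes "C \<ge> 1"
    and "\<exists>A. strip_competitive C A"
  shows "\<forall>n. \<exists>alg. sort_competitive (2 * C) n (4 * C) alg"
proof
  fix n :: nat
  obtain A where A: "strip_competitive C A" using assms(2) by blast
  show "\<exists>alg. sort_competitive (2 * C) n (4 * C) alg"
  proof (cases "n = 0")
    case True
    show ?thesis
      by (rule exI[of _ "\<lambda>_. 0"]) (use True assms(1) in \<open>simp add: sort_competitive_def sort_valid_def
          sort_positions_def sort_cost_def sorted_contents_def\<close>)
  next
    case False
    hence n1: "n \<ge> 1" by simp
    define w where "w = 1 / real n"
    define alg where "alg = (\<lambda>ys. nat \<lfloor>real n * fst (A (map (par w) ys))\<rfloor>)"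
    have w0: "w > 0" using n1 by (simp add: w_def)
    have nw: "real n * w = 1" using n1 by (simp add: w_def)
    show ?thesis unfolding sort_competitive_def
    proof (intro exI allI impI)
      fix xs :: "real list" assume xs: "length xs = n \<and> (\<forall>x\<in>set xs. 0 \<le> x \<and> x \<le> 1)"
      define Ps where "Ps = map (par w) xs"
      define T where "T = online_translations A Ps"
      define s where "s = (\<lambda>k. xs ! k)"
      define a where "a = (\<lambda>k. fst (T!k))"
      define pos where "pos = (\<lambda>k. nat \<lfloor>real n * a k\<rfloor>)"
      have sk: "0 \<le> s k \<and> s k \<le> 1" if "k < n" for k using xs that by (auto simp: s_def)
      have pieces: "\<forall>P\<in>set Ps. is_piece P" using xs w0 by (auto simp: Ps_def intro!: is_piece_par)
      have Pne: "Ps \<noteq> []" using n1 xs by (auto simp: Ps_def)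
      have ok: "placement_ok Ps T" and cost: "packing_cost Ps T \<le> C * strip_OPT Ps"
        using A pieces Pne by (auto simp: strip_competitive_def T_def)
      have OPT: "strip_OPT Ps \<le> 2" unfolding Ps_def by (rule OPT_bound[OF n1 w_def]) (use xs in auto)
      have costle: "packing_cost Ps T \<le> 2 * C"
      proof -
        have "C * strip_OPT Ps \<le> C * 2" using OPT assms(1) by (intro mult_left_mono) auto
        thus ?thesis using cost by simp
      qed
      have lenP: "length Ps = n" using xs by (simp add: Ps_def)
      have Pk: "Ps ! k = par w (s k)" if "k < n" for k using that xs by (simp add: Ps_def s_def)
      have Tk: "T!k = (a k, 0) \<and> 0 \<le> a k" if k: "k < n" for k
      proof -
        have "translate (T!k) (Ps!k) \<subseteq> strip" using ok k lenP by (simp add: placement_ok_def)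
        hence "translate (a k, snd (T!k)) (par w (s k)) \<subseteq> strip" using Pk[OF k] by (simp add: a_def)
        from strip_b0[OF _ this] w0 have "snd (T!k) = 0 \<and> 0 \<le> a k" by simp
        thus ?thesis by (simp add: a_def prod_eq_iff)
      qed
      have sep2: "(a i + w \<le> a j \<and> a i + s i + w \<le> a j + s j) \<or> (a j + w \<le> a i \<and> a j + s j + w \<le> a i + s i)"
        if ij: "i < j" "j < n" for i j
      proof -
        have "interior (translate (T!i) (Ps!i)) \<inter> interior (translate (T!j) (Ps!j)) = {}"
          using ok ij lenP by (simp add: placement_ok_def)
        hence "interior (translate (a i, 0) (par w (s i))) \<inter> interior (translate (a j, 0) (par w (s j))) = {}"
          using Tk[of i] Tk[of j] Pk[of i] Pk[of j] ij by simp
        from sep[OF w0 this] show ?thesis .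
      qed
      have sepg: "(a i + w \<le> a j \<and> a i + s i + w \<le> a j + s j) \<or> (a j + w \<le> a i \<and> a j + s j + w \<le> a i + s i)"
        if ij: "i < n" "j < n" "i \<noteq> j" for i j
      proof (cases "i < j")
        case True thus ?thesis using sep2 ij by blast
      next
        case False hence "j < i" using ij by simp
        thus ?thesis using sep2[of j i] ij by blast
      qed
      have upper: "a k + s k + w \<le> 2 * C" if k: "k < n" for k
      proof -
        have "(a k + s k + w, 1) \<in> translate (T!k) (Ps!k)"
          using Tk[OF k] Pk[OF k] w0 by (simp add: mem_tpar)
        hence "a k + s k + w \<le> packing_cost Ps T" using cost_upper[OF pieces] k lenP by fastforce
        thus ?thesis using costle by simp
      qed
      have pos_alg: "alg (take (Suc k) xs) = pos k" if k: "k < n" for k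
      proof -
        have "T!k = A (take (Suc k) Ps)" using k lenP by (simp add: T_def online_translations_def)
        thus ?thesis by (simp add: alg_def pos_def a_def Ps_def take_map)
      qed
      have sp: "sort_positions alg xs = map pos [0..<n]"
        unfolding sort_positions_def using xs pos_alg by auto
      have posless: "pos i < pos j" if ij: "i < n" "j < n" "a i < a j" for i j
      proof -
        have "i \<noteq> j" using ij by auto
        hence "a i + w \<le> a j" using sepg[OF ij(1,2)] ij(3) w0 by auto
        hence "real n * a i + 1 \<le> real n * a j" using nw
          by (metis distrib_left mult_left_mono of_nat_0_le_iff)
        hence "\<lfloor>real n * a i\<rfloor> + 1 \<le> \<lfloor>real n * a j\<rfloor>"
          by (metis floor_add_int floor_mono of_int_1)
        moreover have "0 \<le> \<lfloor>real n * a i\<rfloor>" using Tk[OF ij(1)] by simp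
        ultimately show ?thesis unfolding pos_def zless_nat_conj by linarith
      qed
      have posne: "pos i \<noteq> pos j" if ij: "i < n" "j < n" "i \<noteq> j" for i j
      proof -
        have "a i \<noteq> a j" using sepg[OF ij] w0 by auto
        hence "a i < a j \<or> a j < a i" by auto
        thus ?thesis using posless ij by (metis less_irrefl)
      qed
      have posbound: "pos k < num_cells (2 * C) n" if k: "k < n" for k
      proof -
        have "a k \<le> 2 * C - w" using upper[OF k] sk[OF k] by simp
        hence "real n * a k \<le> real n * (2 * C - w)" by (intro mult_left_mono) auto
        hence "real n * a k \<le> 2 * C * real n - 1" using nw by (simp add: algebra_simps)
        hence "\<lfloor>real n * a k\<rfloor> \<le> \<lfloor>2 * C * real n - 1\<rfloor>" by (rule floor_mono)
        hence "\<lfloor>real n * a k\<rfloor> < \<lfloor>2 * C * real n\<rfloor>" by simp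
        moreover have "0 \<le> \<lfloor>real n * a k\<rfloor>" using Tk[OF k] by simp
        ultimately show ?thesis unfolding pos_def num_cells_def zless_nat_conj by linarith
      qed
      show "sort_valid (2 * C) n alg xs \<and> sort_cost alg xs \<le> 4 * C"
      proof
        show "sort_valid (2 * C) n alg xs"
          unfolding sort_valid_def sp
        proof
          show "\<forall>p\<in>set (map pos [0..<n]). p < num_cells (2 * C) n" using posbound by simp
          have "inj_on pos {0..<n}" unfolding inj_on_def using posne by (metis atLeastLessThan_iff)
          thus "distinct (map pos [0..<n])" by (simp add: distinct_map)
        qed
      next
        define f where "f = (\<lambda>k. sort_positions alg xs ! k)"
        define \<sigma> where "\<sigma> = sort_key f [0..<n]"
        have fk: "f k = pos k" if "k < n" for k using that by (simp add: f_def sp)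
        have set\<sigma>: "set \<sigma> = {0..<n}" by (simp add: \<sigma>_def)
        have len\<sigma>: "length \<sigma> = n" by (simp add: \<sigma>_def)
        have "sorted (map f \<sigma>)" unfolding \<sigma>_def by (rule sorted_sort_key)
        hence "sorted_wrt (\<lambda>u v. f u \<le> f v) \<sigma>" by (simp add: sorted_map)
        moreover have "distinct \<sigma>" by (simp add: \<sigma>_def)
        ultimately have sw: "sorted_wrt (\<lambda>u v. f u \<le> f v \<and> u \<noteq> v) \<sigma>" by (rule sorted_wrt_distinct_ne)
        have chain: "sorted_wrt (\<lambda>u v. a u + w + max 0 (s u - s v) \<le> a v) \<sigma>"
        proof (rule sorted_wrt_mono_rel[OF _ sw])
          fix u v assume uv: "u \<in> set \<sigma>" "v \<in> set \<sigma>" "f u \<le> f v \<and> u \<noteq> v"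
          hence u: "u < n" and v: "v < n" using set\<sigma> by auto
          have "pos u \<le> pos v" using uv fk u v by simp
          hence "\<not> a v < a u" using posless[OF v u] by auto
          hence "a u + w \<le> a v \<and> a u + s u + w \<le> a v + s v" using sepg[OF u v] uv w0 by auto
          thus "a u + w + max 0 (s u - s v) \<le> a v" by (simp add: max_def)
        qed
        obtain u L where \<sigma>uL: "\<sigma> = u # L" using len\<sigma> n1 by (cases \<sigma>) auto
        have u: "u < n" using set\<sigma> \<sigma>uL by auto
        have lenL: "real (length L) = real n - 1" using len\<sigma> \<sigma>uL by auto
        have lst: "last \<sigma> < n" using set\<sigma> \<sigma>uL by (metis atLeastLessThan_iff last_in_set list.simps(3))
        have s1: "\<forall>x\<in>set (u#L). s x \<le> 1" using set\<sigma> \<sigma>uL sk by auto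
        have P: "path_len (map s (u#L) @ [1]) \<le> 1 - s u + 2*(a (last (u#L)) - a u - real (length L) * w)"
          by (rule chain_path) (use chain \<sigma>uL s1 in auto)
        have sc: "sorted_contents alg xs = map s \<sigma>"
          using xs by (simp add: sorted_contents_def \<sigma>_def f_def s_def)
        have "sort_cost alg xs = s u + path_len (map s (u#L) @ [1])"
          using sk[OF u] by (simp add: sort_cost_def sc \<sigma>uL)
        also have "\<dots> \<le> 1 + 2*(a (last \<sigma>) - a u - (real n - 1) * w)" using P lenL \<sigma>uL by simp
        also have "\<dots> \<le> 1 + 2*(2 * C - w - (real n - 1) * w)"
          using upper[OF lst] sk[OF lst] Tk[OF u] by simp
        also have "\<dots> = 4 * C - 1" using nw by (simp add: algebra_simps)
        finally show "sort_cost alg xs \<le> 4 * C" by simp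
      qed
    qed
  qed
qed

end
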